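(* Consider the networked SVIRS system below on a connected weighted undirected graph, with parameters $N>0$, $0<r<1$, $\mu>0$, $0\le p\le 1$, $\beta>0$, $\xi\ge 0$, $\eta\ge 0$, $0\le\sigma\le 1$, $\gamma\ge 0$, $0<\epsilon\le 1$. If $\mathcal{R}_0>1$, then the system has a unique spatially constant equilibrium $\mathbf{E}=(S_*,V_*,I_*,R_* )$ with $I_*>0$ (the endemic equilibrium).
   Context: Let $G=\langle \mathcal V,\mathcal E,\mathcal W\rangle$ be a connected weighted undirected graph without self-loops, $|\mathcal V|=n$, with weights $w(x,y)=w(y,x)>0$ for adjacent nodes $x\sim y$. For $F:\mathcal V\to\mathbb R$ define $\Delta F(x)=\sum_{y\in\mathcal V,\,y\sim x} w(x,y)\,[F(y)-F(x)]$. The SVIRS model is, for $(x,t)\in\mathcal V\times[0,\infty)$, $\frac{dS}{dt}-\epsilon\Delta S=\mu(1-r)N-(\mu+p)S-\beta SI+\xi V+\eta R$, $\frac{dV}{dt}-\epsilon\Delta V=\mu rN+pS-\beta\sigma VI-(\mu+\xi)V$, $\frac{dI}{dt}-\epsilon\Delta I=\beta SI+\beta\sigma VI-(\mu+\gamma)I$, $\frac{dR}{dt}-\epsilon\Delta R=\gamma I-(\mu+\eta)R$, with $S,V,I,R:\mathcal V\times[0,\infty)\to\mathbb R$. A spatially constant equilibrium is a constant (in $x$ and $t$) solution; for such, $\Delta$ of each component vanishes. The basic reproduction number is $\mathcal R_0=\dfrac{\beta\big((\xi+(1-r)\mu)+\sigma(p+\mu r)\big)N}{(\gamma+\mu)(\mu+p+\xi)}$.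 *)

theory Defs
  imports "HOL-Analysis.Analysis"
begin

definition weighted_graph :: "('v::finite \<Rightarrow> 'v \<Rightarrow> bool) \<Rightarrow> ('v \<Rightarrow> 'v \<Rightarrow> real) \<Rightarrow> bool" where
  "weighted_graph E w \<longleftrightarrow>
     (\<forall>x. \<not> E x x) \<and> (\<forall>x y. E x y \<longrightarrow> E y x) \<and>
     (\<forall>x y. E x y \<longrightarrow> w x y = w y x \<and> w x y > 0) \<and>
     (\<forall>x y. E\<^sup>*\<^sup>* x y)"

definition graph_laplacian :: "('v::finite \<Rightarrow> 'v \<Rightarrow> bool) \<Rightarrow> ('v \<Rightarrow> 'v \<Rightarrow> real) \<Rightarrow> ('v \<Rightarrow> real) \<Rightarrow> 'v \<Rightarrow> real" where
  "graph_laplacian E w F x = (\<Sum>y\<in>{y. E x y}. w x y * (F y - F x))"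

definition svirs_solution ::
  "('v::finite \<Rightarrow> 'v \<Rightarrow> bool) \<Rightarrow> ('v \<Rightarrow> 'v \<Rightarrow> real) \<Rightarrow>
   real \<Rightarrow> real \<Rightarrow> real \<Rightarrow> real \<Rightarrow> real \<Rightarrow> real \<Rightarrow> real \<Rightarrow> real \<Rightarrow> real \<Rightarrow> real \<Rightarrow>
   ('v \<Rightarrow> real \<Rightarrow> real) \<Rightarrow> ('v \<Rightarrow> real \<Rightarrow> real) \<Rightarrow> ('v \<Rightarrow> real \<Rightarrow> real) \<Rightarrow> ('v \<Rightarrow> real \<Rightarrow> real) \<Rightarrow> bool" where
  "svirs_solution E w N r \<mu> p \<beta> \<xi> \<eta> \<sigma> \<gamma> \<epsilon> S V I R \<longleftrightarrow>
    (\<forall>x. \<forall>t\<ge>0.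
      ((\<lambda>t. S x t) has_real_derivative
         (\<epsilon> * graph_laplacian E w (\<lambda>y. S y t) x
          + \<mu> * (1 - r) * N - (\<mu> + p) * S x t - \<beta> * S x t * I x t + \<xi> * V x t + \<eta> * R x t))
        (at t within {0..}) \<and>
      ((\<lambda>t. V x t) has_real_derivative
         (\<epsilon> * graph_laplacian E w (\<lambda>y. V y t) x
          + \<mu> * r * N + p * S x t - \<beta> * \<sigma> * V x t * I x t - (\<mu> + \<xi>) * V x t))
        (at t within {0..}) \<and>
      ((\<lambda>t. I x t) has_real_derivative
         (\<epsilon> * graph_laplacian E w (\<lambda>y. I y t) x
          + \<beta> * S x t * I x t + \<beta> * \<sigma> * V x t * I x t - (\<mu> + \<gamma>) * I x t))
        (at t within {0..}) \<and>
      ((\<lambda>t. R x t) has_real_derivative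
         (\<epsilon> * graph_laplacian E w (\<lambda>y. R y t) x
          + \<gamma> * I x t - (\<mu> + \<eta>) * R x t))
        (at t within {0..}))"

definition const_equilibrium ::
  "('v::finite \<Rightarrow> 'v \<Rightarrow> bool) \<Rightarrow> ('v \<Rightarrow> 'v \<Rightarrow> real) \<Rightarrow>
   real \<Rightarrow> real \<Rightarrow> real \<Rightarrow> real \<Rightarrow> real \<Rightarrow> real \<Rightarrow> real \<Rightarrow> real \<Rightarrow> real \<Rightarrow> real \<Rightarrow>
   real \<times> real \<times> real \<times> real \<Rightarrow> bool" where
  "const_equilibrium E w N r \<mu> p \<beta> \<xi> \<eta> \<sigma> \<gamma> \<epsilon> e \<longleftrightarrow>
    (case e of (S0, V0, I0, R0) \<Rightarrow>
      svirs_solution E w N r \<mu> p \<beta> \<xi> \<eta> \<sigma> \<gamma> \<epsilon>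
        (\<lambda>x t. S0) (\<lambda>x t. V0) (\<lambda>x t. I0) (\<lambda>x t. R0))"

definition basic_repr_number :: "real \<Rightarrow> real \<Rightarrow> real \<Rightarrow> real \<Rightarrow> real \<Rightarrow> real \<Rightarrow> real \<Rightarrow> real \<Rightarrow> real" where
  "basic_repr_number N r \<mu> p \<beta> \<xi> \<sigma> \<gamma> =
     \<beta> * ((\<xi> + (1 - r) * \<mu>) + \<sigma> * (p + \<mu> * r)) * N / ((\<gamma> + \<mu>) * (\<mu> + p + \<xi>))"

end

theory Submission
  imports Defs
begin
lemma lap0: "graph_laplacian E w (\<lambda>y. c) x = 0"
  unfolding graph_laplacian_def by simp

lemma derivz: "((\<lambda>t. c) has_real_derivative D) (at (1::real) within {0..}) \<Longrightarrow> D = 0"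
proof -
  assume h: "((\<lambda>t. c) has_real_derivative D) (at (1::real) within {0..})"
  have "at (1::real) within {0..} = at 1"
    by (rule at_within_interior) simp
  with h have "((\<lambda>t. c) has_real_derivative D) (at 1)" by simp
  then show ?thesis using DERIV_const DERIV_unique by blast
qed

lemma ceq_iff:
  "const_equilibrium E w N r \<mu> p \<beta> \<xi> \<eta> \<sigma> \<gamma> \<epsilon> (S0, V0, I0, R0) \<longleftrightarrow>
   (\<mu> * (1 - r) * N - (\<mu> + p) * S0 - \<beta> * S0 * I0 + \<xi> * V0 + \<eta> * R0 = 0 \<and>
    \<mu> * r * N + p * S0 - \<beta> * \<sigma> * V0 * I0 - (\<mu> + \<xi>) * V0 = 0 \<and>
    \<beta> * S0 * I0 + \<beta> * \<sigma> * V0 * I0 - (\<mu> + \<gamma>) * I0 = 0 \<and>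
    \<gamma> * I0 - (\<mu> + \<eta>) * R0 = 0)"
  (is "?L \<longleftrightarrow> ?R")
proof
  assume ?L
  then have "svirs_solution E w N r \<mu> p \<beta> \<xi> \<eta> \<sigma> \<gamma> \<epsilon> (\<lambda>x t. S0) (\<lambda>x t. V0) (\<lambda>x t. I0) (\<lambda>x t. R0)"
    by (simp add: const_equilibrium_def)
  then have "\<forall>t\<ge>0. ((\<lambda>t. S0) has_real_derivative
         (\<mu> * (1 - r) * N - (\<mu> + p) * S0 - \<beta> * S0 * I0 + \<xi> * V0 + \<eta> * R0)) (at t within {0..}) \<and>
      ((\<lambda>t. V0) has_real_derivative
         (\<mu> * r * N + p * S0 - \<beta> * \<sigma> * V0 * I0 - (\<mu> + \<xi>) * V0)) (at t within {0..}) \<and>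
      ((\<lambda>t. I0) has_real_derivative (\<beta> * S0 * I0 + \<beta> * \<sigma> * V0 * I0 - (\<mu> + \<gamma>) * I0)) (at t within {0..}) \<and>
      ((\<lambda>t. R0) has_real_derivative (\<gamma> * I0 - (\<mu> + \<eta>) * R0)) (at t within {0..})"
    unfolding svirs_solution_def lap0 by simp
  then show ?R using derivz by (meson zero_le_one)
next
  assume ?R
  then show ?L unfolding const_equilibrium_def svirs_solution_def lap0 by simp
qed

theorem mainTheorem1:
  fixes E :: "'v::finite \<Rightarrow> 'v \<Rightarrow> bool" and w :: "'v \<Rightarrow> 'v \<Rightarrow> real"
    and N r \<mu> p \<beta> \<xi> \<eta> \<sigma> \<gamma> \<epsilon> :: real
  assumes "weighted_graph E w"
    and "N > 0" and "0 < r" and "r < 1" and "\<mu> > 0" and "0 \<le> p" and "p \<le> 1"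
    and "\<beta> > 0" and "\<xi> \<ge> 0" and "\<eta> \<ge> 0" and "0 \<le> \<sigma>" and "\<sigma> \<le> 1"
    and "\<gamma> \<ge> 0" and "0 < \<epsilon>" and "\<epsilon> \<le> 1"
    and "basic_repr_number N r \<mu> p \<beta> \<xi> \<sigma> \<gamma> > 1"
  shows "\<exists>!e. fst (snd (snd e)) > 0 \<and> const_equilibrium E w N r \<mu> p \<beta> \<xi> \<eta> \<sigma> \<gamma> \<epsilon> e"
proof -
  note as = assms
  define a where "a = (\<mu> + \<gamma>) / \<beta>"
  define k where "k = (\<mu> + \<eta>) / (\<mu> + \<eta> + \<gamma>)"
  define X where "X = \<xi> + (1 - r) * \<mu> + \<sigma> * (p + \<mu> * r)"
  define Iof where "Iof = (\<lambda>V. (N - a - (1 - \<sigma>) * V) * k)"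
  define f where "f = (\<lambda>V. \<mu> * r * N + p * (a - \<sigma> * V) - \<beta> * \<sigma> * V * Iof V - (\<mu> + \<xi>) * V)"
  define c0 where "c0 = \<mu> * r * N + p * a"
  define c1 where "c1 = - (p * \<sigma> + \<mu> + \<xi>) - \<beta> * \<sigma> * (N - a) * k"
  define c2 where "c2 = \<beta> * \<sigma> * (1 - \<sigma>) * k"
  have kpos: "k > 0" using as unfolding k_def by simp
  have fpoly: "f V = c0 + c1 * V + c2 * V^2" for V
    unfolding f_def Iof_def c0_def c1_def c2_def by (simp add: algebra_simps power2_eq_square)
  have den: "(\<gamma> + \<mu>) * (\<mu> + p + \<xi>) > 0" using as by (simp add: add_nonneg_pos)
  have key: "\<beta> * X * N > (\<gamma> + \<mu>) * (\<mu> + p + \<xi>)"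
    using as(16) den unfolding basic_repr_number_def X_def
    by (simp add: pos_less_divide_eq mult.commute mult.left_commute)
  have Xle: "X \<le> \<mu> + p + \<xi>"
  proof -
    have "\<sigma> * (p + \<mu> * r) \<le> 1 * (p + \<mu> * r)"
      using as by (intro mult_right_mono) auto
    then show ?thesis unfolding X_def by (simp add: algebra_simps)
  qed
  have "\<beta> * X * N \<le> \<beta> * (\<mu> + p + \<xi>) * N"
    using Xle as by (intro mult_right_mono mult_left_mono) auto
  with key have "(\<gamma> + \<mu>) * (\<mu> + p + \<xi>) < \<beta> * N * (\<mu> + p + \<xi>)" by (simp add: algebra_simps)
  then have "\<gamma> + \<mu> < \<beta> * N" using den as
    by (smt (verit) mult_right_mono zero_less_mult_pos)
  then have Na: "N > a" unfolding a_def using as by (simp add: pos_divide_less_eq mult.commute)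
  have c1neg: "c1 < 0"
  proof -
    have "\<beta> * \<sigma> * (N - a) * k \<ge> 0" using as Na kpos by simp
    moreover have "p * \<sigma> \<ge> 0" using as by simp
    ultimately show ?thesis unfolding c1_def using as by linarith
  qed
  have c2nn: "c2 \<ge> 0" unfolding c2_def using as kpos by simp
  have c0pos: "c0 > 0" unfolding c0_def using as Na
    by (simp add: add_pos_nonneg a_def)
  have aX: "a * (p + \<mu> + \<xi>) < N * X"
  proof -
    have "(\<mu> + \<gamma>) * (p + \<mu> + \<xi>) < \<beta> * (N * X)" using key by (simp add: algebra_simps)
    then show ?thesis unfolding a_def using as by (simp add: divide_less_eq mult.commute mult.left_commute)
  qed
  have fstar: "f ((N - a) / (1 - \<sigma>)) < 0" if "\<sigma> < 1"
  proof -
    define Vs where "Vs = (N - a) / (1 - \<sigma>)"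
    have I0: "Iof Vs = 0" unfolding Iof_def Vs_def using that by simp
    have "(1 - \<sigma>) * f Vs = (1 - \<sigma>) * (\<mu> * r * N + p * a) - (p * \<sigma> + \<mu> + \<xi>) * (N - a)"
    proof -
      have vs: "(1 - \<sigma>) * Vs = N - a" unfolding Vs_def using that by simp
      have "(1 - \<sigma>) * f Vs = (1 - \<sigma>) * (\<mu> * r * N + p * a) - (p * \<sigma> + \<mu> + \<xi>) * ((1 - \<sigma>) * Vs)"
        unfolding f_def I0 by (simp add: algebra_simps)
      then show ?thesis unfolding vs .
    qed
    also have "\<dots> = a * (p + \<mu> + \<xi>) - N * X" unfolding X_def by (simp add: algebra_simps)
    finally have "(1 - \<sigma>) * f Vs < 0" using aX by simp
    then show ?thesis using that unfolding Vs_def by (simp add: mult_less_0_iff)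
  qed
  have uniq: "V1 = V2" if h: "f V1 = 0" "f V2 = 0" "(1 - \<sigma>) * V1 < N - a" "(1 - \<sigma>) * V2 < N - a" for V1 V2
  proof (rule ccontr)
    assume ne: "V1 \<noteq> V2"
    have "(V1 - V2) * (c1 + c2 * (V1 + V2)) = f V1 - f V2"
      unfolding fpoly by (simp add: algebra_simps power2_eq_square)
    then have s: "c1 + c2 * (V1 + V2) = 0" using h ne by simp
    then have "c2 \<noteq> 0" using c1neg by auto
    then have c2p: "c2 > 0" using c2nn by simp
    then have "\<sigma> \<noteq> 1" unfolding c2_def by auto
    then have sl: "\<sigma> < 1" using as by simp
    define Vs where "Vs = (N - a) / (1 - \<sigma>)"
    have "V1 < Vs" "V2 < Vs" using h sl unfolding Vs_def by (simp_all add: pos_less_divide_eq mult.commute)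
    have "f Vs = f Vs - f V1" using h by simp
    also have "\<dots> = (Vs - V1) * (c1 + c2 * (Vs + V1))"
      unfolding fpoly by (simp add: algebra_simps power2_eq_square)
    also have "c1 = - c2 * (V1 + V2)" using s by simp
    finally have "f Vs = c2 * (Vs - V1) * (Vs - V2)" by (simp add: algebra_simps)
    also have "\<dots> > 0" using c2p \<open>V1 < Vs\<close> \<open>V2 < Vs\<close> by simp
    finally show False using fstar[OF sl] unfolding Vs_def by simp
  qed
  obtain V0 where V0: "f V0 = 0" "(1 - \<sigma>) * V0 < N - a"
  proof (cases "\<sigma> < 1")
    case True
    define Vs where "Vs = (N - a) / (1 - \<sigma>)"
    have Vsp: "Vs > 0" unfolding Vs_def using True Na by simp
    have "f 0 > 0" using fpoly c0pos by simp
    moreover have "f Vs < 0" using fstar True unfolding Vs_def by simp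
    moreover have "\<forall>x. 0 \<le> x \<and> x \<le> Vs \<longrightarrow> isCont f x" unfolding fpoly[abs_def] by (intro allI impI continuous_intros)
    ultimately obtain x where x: "0 \<le> x" "x \<le> Vs" "f x = 0"
      using IVT2[of f Vs 0 0] Vsp by auto
    then have "x \<noteq> Vs" using \<open>f Vs < 0\<close> by auto
    then have "x < Vs" using x by simp
    then have "(1 - \<sigma>) * x < N - a" using True unfolding Vs_def by (simp add: pos_less_divide_eq mult.commute)
    then show ?thesis using that x by blast
  next
    case False
    then have s1: "\<sigma> = 1" using as by simp
    then have "c2 = 0" unfolding c2_def by simp
    define x where "x = - c0 / c1"
    have "f x = 0" unfolding fpoly \<open>c2 = 0\<close> x_def using c1neg by simp
    moreover have "(1 - \<sigma>) * x < N - a" using s1 Na by simp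
    ultimately show ?thesis using that by blast
  qed
  define e0 where "e0 = (a - \<sigma> * V0, V0, Iof V0, \<gamma> * Iof V0 / (\<mu> + \<eta>))"
  have mpe: "\<mu> + \<eta> > 0" using as by simp
  have char: "e = e0" if "fst (snd (snd e)) > 0" "const_equilibrium E w N r \<mu> p \<beta> \<xi> \<eta> \<sigma> \<gamma> \<epsilon> e" for e
  proof -
    obtain S V I R where e: "e = (S, V, I, R)" by (cases e) auto
    have Ip: "I > 0" using that e by simp
    have eq: "\<mu> * (1 - r) * N - (\<mu> + p) * S - \<beta> * S * I + \<xi> * V + \<eta> * R = 0"
       "\<mu> * r * N + p * S - \<beta> * \<sigma> * V * I - (\<mu> + \<xi>) * V = 0"
       "\<beta> * S * I + \<beta> * \<sigma> * V * I - (\<mu> + \<gamma>) * I = 0"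
       "\<gamma> * I - (\<mu> + \<eta>) * R = 0" using that(2) unfolding e ceq_iff by blast+
    have "I * (\<beta> * S + \<beta> * \<sigma> * V - (\<mu> + \<gamma>)) = 0" using eq(3) by (simp add: algebra_simps)
    then have "\<beta> * S + \<beta> * \<sigma> * V = \<mu> + \<gamma>" using Ip by simp
    then have Se: "S = a - \<sigma> * V" unfolding a_def using as by (simp add: field_simps)
    have Re: "R = \<gamma> * I / (\<mu> + \<eta>)" using eq(4) mpe by (simp add: field_simps)
    have "\<mu> * (N - (S + V + I + R)) = 0" using eq by (simp add: algebra_simps)
    then have sum: "S + V + I + R = N" using as by simp
    have Ie: "I = Iof V" unfolding Iof_def k_def using sum mpe as unfolding Se Re
      by (simp add: field_simps)
    have fV: "f V = 0" unfolding f_def using eq(2) Se Ie by simp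
    have "(N - a - (1 - \<sigma>) * V) * k > 0" using Ip Ie unfolding Iof_def by simp
    then have "(1 - \<sigma>) * V < N - a" using kpos by (simp add: zero_less_mult_iff)
    then have "V = V0" using uniq fV V0 by blast
    then show ?thesis unfolding e e0_def using Se Ie Re by simp
  qed
  have e0ok: "fst (snd (snd e0)) > 0 \<and> const_equilibrium E w N r \<mu> p \<beta> \<xi> \<eta> \<sigma> \<gamma> \<epsilon> e0"
  proof -
    have Ip: "Iof V0 > 0" unfolding Iof_def using V0 kpos by simp
    define S0 where "S0 = a - \<sigma> * V0"
    define I0 where "I0 = Iof V0"
    define R0 where "R0 = \<gamma> * I0 / (\<mu> + \<eta>)"
    have e3: "\<beta> * S0 * I0 + \<beta> * \<sigma> * V0 * I0 - (\<mu> + \<gamma>) * I0 = 0"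
      unfolding S0_def a_def using as by (simp add: field_simps)
    have e4: "\<gamma> * I0 - (\<mu> + \<eta>) * R0 = 0" unfolding R0_def using mpe by simp
    have e2: "\<mu> * r * N + p * S0 - \<beta> * \<sigma> * V0 * I0 - (\<mu> + \<xi>) * V0 = 0"
      using V0(1) unfolding f_def S0_def I0_def by simp
    have ir: "I0 + R0 = I0 * ((\<mu> + \<eta> + \<gamma>) / (\<mu> + \<eta>))"
      unfolding R0_def using mpe by (simp add: field_simps)
    have kk: "k * ((\<mu> + \<eta> + \<gamma>) / (\<mu> + \<eta>)) = 1"
      unfolding k_def using mpe as by simp
    have "I0 * ((\<mu> + \<eta> + \<gamma>) / (\<mu> + \<eta>)) = N - a - (1 - \<sigma>) * V0"
      unfolding I0_def Iof_def mult.assoc kk by simp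
    then have "I0 + R0 = N - a - (1 - \<sigma>) * V0" using ir by simp
    then have sum: "S0 + V0 + I0 + R0 = N"
      unfolding S0_def by (simp add: algebra_simps)
    have e1: "\<mu> * (1 - r) * N - (\<mu> + p) * S0 - \<beta> * S0 * I0 + \<xi> * V0 + \<eta> * R0 = 0"
    proof -
      have "\<mu> * (1 - r) * N - (\<mu> + p) * S0 - \<beta> * S0 * I0 + \<xi> * V0 + \<eta> * R0
        = \<mu> * (N - (S0 + V0 + I0 + R0))
          - (\<mu> * r * N + p * S0 - \<beta> * \<sigma> * V0 * I0 - (\<mu> + \<xi>) * V0)
          - (\<beta> * S0 * I0 + \<beta> * \<sigma> * V0 * I0 - (\<mu> + \<gamma>) * I0)
          - (\<gamma> * I0 - (\<mu> + \<eta>) * R0)" by (simp add: algebra_simps)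
      then show ?thesis using sum e2 e3 e4 by simp
    qed
    have "e0 = (S0, V0, I0, R0)" unfolding e0_def S0_def I0_def R0_def by simp
    moreover have "const_equilibrium E w N r \<mu> p \<beta> \<xi> \<eta> \<sigma> \<gamma> \<epsilon> (S0, V0, I0, R0)"
      unfolding ceq_iff using e1 e2 e3 e4 by blast
    ultimately show ?thesis using Ip I0_def by simp
  qed
  show ?thesis using e0ok char by blast
qed

end
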